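(* Let $(\Omega,\mathcal{F},\Pr)$ be a probability space with binary random variables $O_k,T_k$ indexed by a finite set $K$, and write $O=(O_k)_{k\in K}$. Assume the locality condition: for each $k\in K$ there is $h_k\in[0,1]$ with $\Pr(T_k=1\mid O=o)=h_k$ for every $o\in\{0,1\}^K$ with $o_k=0$ and $\Pr(O=o)>0$. Let $k_0\in K$ and let $K_1,\dots,K_j\subseteq K\setminus\{k_0\}$ be nonempty finite sets. Define the event $$H_0=\{O_{k_0}=0\}\ \vee\ \bigwedge_{i=1}^j\Big(\bigvee_{k\in K_i}\{O_k=0\}\Big),$$ assumed to have positive probability. Then $$\Pr\Big(\{T_{k_0}=1\}\wedge\bigvee_{i=1}^j\bigwedge_{k\in K_i}\{T_k=1\}\ \Big|\ H_0\Big)\le \max\Big\{h_{k_0},\ \sum_{i=1}^j \max_{k\in K_i} h_k\Big\}.$$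
   Context: $O_k=1$ means "oracle $k$ outputs $P_k$", $T_k=1$ means "test $k$ outputs $P_k$", and $h_k$ is the Type I error rate of test $k$. In the paper's application to an edge $A-C$ oriented by unshielded v-structures $A\to C\leftarrow \mathbf{B}_i$, $i=1,\dots,j$: $k_0$ corresponds to the adjacency $A-C$ and $K_i=\{$adjacency $\mathbf{B}_i-C$, collider condition $\gamma_{A\mathbf{B}_i|C}\}$, giving the bound $\max\{p_{A-C},\sum_{i=1}^j\max\{p_{\mathbf{B}_i-C},p_{\gamma_{A\mathbf{B}_i|C}}\}\}$; the orientation-rule bounds are analogous instances. *)

theory Defs
  imports "HOL-Probability.Probability"
begin

end

theory Submission
  imports Defs
begin

theorem mainTheorem4:
  fixes M :: "'a measure"
    and K :: "'k set"
    and Or Te :: "'k \<Rightarrow> 'a \<Rightarrow> bool"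
    and h :: "'k \<Rightarrow> real"
    and k0 :: 'k
    and j :: nat
    and Ks :: "nat \<Rightarrow> 'k set"
  assumes "prob_space M"
    and "finite K"
    and measO: "\<And>k. k \<in> K \<Longrightarrow> {\<omega> \<in> space M. Or k \<omega>} \<in> sets M"
    and measT: "\<And>k. k \<in> K \<Longrightarrow> {\<omega> \<in> space M. Te k \<omega>} \<in> sets M"
    and h_range: "\<And>k. k \<in> K \<Longrightarrow> 0 \<le> h k \<and> h k \<le> 1"
    and locality: "\<And>k o'. k \<in> K \<Longrightarrow> \<not> o' k \<Longrightarrow>
        \<P>(\<omega> in M. \<forall>l\<in>K. Or l \<omega> = o' l) > 0 \<Longrightarrow>
        \<P>(\<omega> in M. Te k \<omega> \<bar> \<forall>l\<in>K. Or l \<omega> = o' l) = h k"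
    and "k0 \<in> K"
    and "j \<ge> 1"
    and Ks_sub: "\<And>i. i \<in> {1..j} \<Longrightarrow> Ks i \<subseteq> K - {k0}"
    and Ks_ne: "\<And>i. i \<in> {1..j} \<Longrightarrow> Ks i \<noteq> {}"
    and H0_pos: "\<P>(\<omega> in M. \<not> Or k0 \<omega> \<or> (\<forall>i\<in>{1..j}. \<exists>k\<in>Ks i. \<not> Or k \<omega>)) > 0"
  shows "\<P>(\<omega> in M. Te k0 \<omega> \<and> (\<exists>i\<in>{1..j}. \<forall>k\<in>Ks i. Te k \<omega>)
            \<bar> \<not> Or k0 \<omega> \<or> (\<forall>i\<in>{1..j}. \<exists>k\<in>Ks i. \<not> Or k \<omega>))
         \<le> max (h k0) (\<Sum>i=1..j. Max (h ` Ks i))"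
proof -
  interpret prob_space M by fact
  have pO: "Measurable.pred M (Or k)" if "k \<in> K" for k using measO[OF that] by (subst pred_def) simp
  have pT: "Measurable.pred M (Te k)" if "k \<in> K" for k using measT[OF that] by (subst pred_def) simp
  have finKs: "finite (Ks i)" if "i \<in> {1..j}" for i
    using Ks_sub[OF that] \<open>finite K\<close> by (meson Diff_subset finite_subset)
  define hc where "hc o' \<longleftrightarrow> \<not> o' k0 \<or> (\<forall>i\<in>{1..j}. \<exists>k\<in>Ks i. \<not> o' k)" for o' :: "'k \<Rightarrow> bool"
  define Ep where "Ep \<omega> \<longleftrightarrow> Te k0 \<omega> \<and> (\<exists>i\<in>{1..j}. \<forall>k\<in>Ks i. Te k \<omega>)" for \<omega>
  define Hp where "Hp \<omega> \<longleftrightarrow> \<not> Or k0 \<omega> \<or> (\<forall>i\<in>{1..j}. \<exists>k\<in>Ks i. \<not> Or k \<omega>)" for \<omega>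
  define A where "A o' = {\<omega>\<in>space M. \<forall>l\<in>K. Or l \<omega> = o' l}" for o' :: "'k \<Rightarrow> bool"
  define Os where "Os = {o' \<in> PiE K (\<lambda>_. UNIV::bool set). hc o'}"
  define B where "B = max (h k0) (\<Sum>i=1..j. Max (h ` Ks i))"
  define E where "E = {\<omega>\<in>space M. Ep \<omega>}"
  have pA: "Measurable.pred M (\<lambda>\<omega>. \<forall>l\<in>K. Or l \<omega> = o' l)" for o'
    by (intro pred_intros_finite pred_intros_logic \<open>finite K\<close>) (auto simp: pO)
  hence A_sets: "A o' \<in> sets M" for o' by (simp add: A_def pred_def)
  have pE: "Measurable.pred M Ep" unfolding Ep_def
    using \<open>k0 \<in> K\<close> Ks_sub finKs
    by (intro pred_intros_finite pred_intros_logic finite_atLeastAtMost) (auto intro: pT)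
  hence E_sets: "E \<in> sets M" by (simp add: E_def pred_def)
  have TA_sets: "{\<omega>\<in>space M. Te k \<omega>} \<inter> A o' \<in> sets M" if "k \<in> K" for k o'
    using measT[OF that] A_sets by blast
  have finPi: "finite (PiE K (\<lambda>_. UNIV::bool set))"
    using \<open>finite K\<close> by (intro finite_PiE) auto
  have finOs: "finite Os" unfolding Os_def
    using finPi by (rule finite_subset[rotated]) auto
  have disj: "disjoint_family_on A Os"
    unfolding disjoint_family_on_def
  proof (intro ballI impI)
    fix a b assume ab: "a \<in> Os" "b \<in> Os" "a \<noteq> b"
    then have "\<exists>l\<in>K. a l \<noteq> b l"
      unfolding Os_def using PiE_ext by blast
    then show "A a \<inter> A b = {}" unfolding A_def by auto
  qed
  have rest: "restrict (\<lambda>l. Or l \<omega>) K \<in> PiE K (\<lambda>_. UNIV)" for \<omega> by auto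
  have hcH: "hc (restrict (\<lambda>l. Or l \<omega>) K) \<longleftrightarrow> Hp \<omega>" for \<omega>
  proof -
    have r: "restrict (\<lambda>l. Or l \<omega>) K k = Or k \<omega>" if "i \<in> {1..j}" "k \<in> Ks i" for i k
      using Ks_sub[OF that(1)] that(2) by auto
    have "(\<forall>i\<in>{1..j}. \<exists>k\<in>Ks i. \<not> restrict (\<lambda>l. Or l \<omega>) K k) \<longleftrightarrow> (\<forall>i\<in>{1..j}. \<exists>k\<in>Ks i. \<not> Or k \<omega>)"
      using r by blast
    moreover have "restrict (\<lambda>l. Or l \<omega>) K k0 = Or k0 \<omega>" using \<open>k0 \<in> K\<close> by simp
    ultimately show ?thesis unfolding hc_def Hp_def by simp
  qed
  have hcA: "Hp \<omega>" if "o' \<in> Os" "\<omega> \<in> A o'" for o' \<omega>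
  proof -
    have "restrict (\<lambda>l. Or l \<omega>) K = o'"
    proof (rule PiE_ext)
      show "restrict (\<lambda>l. Or l \<omega>) K \<in> PiE K (\<lambda>_. UNIV)" by (rule rest)
      show "o' \<in> PiE K (\<lambda>_. UNIV)" using that(1) by (simp add: Os_def)
      show "restrict (\<lambda>l. Or l \<omega>) K i = o' i" if "i \<in> K" for i
        using that \<open>\<omega> \<in> A o'\<close> by (simp add: A_def)
    qed
    then show ?thesis using hcH[of \<omega>] that(1) by (simp add: Os_def)
  qed
  have decH: "{\<omega>\<in>space M. Hp \<omega>} = (\<Union>o'\<in>Os. A o')"
  proof
    show "{\<omega>\<in>space M. Hp \<omega>} \<subseteq> (\<Union>o'\<in>Os. A o')"
    proof
      fix \<omega> assume "\<omega> \<in> {\<omega>\<in>space M. Hp \<omega>}"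
      then show "\<omega> \<in> (\<Union>o'\<in>Os. A o')"
        using hcH[of \<omega>] rest[of \<omega>] unfolding Os_def A_def
        by (intro UN_I[of "restrict (\<lambda>l. Or l \<omega>) K"]) auto
    qed
    show "(\<Union>o'\<in>Os. A o') \<subseteq> {\<omega>\<in>space M. Hp \<omega>}"
      using hcA unfolding A_def by blast
  qed
  have decEH: "{\<omega>\<in>space M. Ep \<omega> \<and> Hp \<omega>} = (\<Union>o'\<in>Os. E \<inter> A o')"
    using decH unfolding E_def by blast
  have atom: "prob (E \<inter> A o') \<le> B * prob (A o')" if oO: "o' \<in> Os" for o'
  proof (cases "prob (A o') = 0")
    case True
    have "prob (E \<inter> A o') \<le> prob (A o')"
      using A_sets by (intro finite_measure_mono) auto
    then show ?thesis using True by simp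
  next
    case False
    then have pos: "prob (A o') > 0" using measure_nonneg[of M "A o'"] by linarith
    have loc: "prob ({\<omega>\<in>space M. Te k \<omega>} \<inter> A o') = h k * prob (A o')"
      if "k \<in> K" "\<not> o' k" for k
    proof -
      have eq1: "\<P>(\<omega> in M. \<forall>l\<in>K. Or l \<omega> = o' l) = prob (A o')" by (simp add: A_def)
      have eq2: "\<P>(\<omega> in M. Te k \<omega> \<and> (\<forall>l\<in>K. Or l \<omega> = o' l)) = prob ({\<omega>\<in>space M. Te k \<omega>} \<inter> A o')"
        unfolding A_def by (intro arg_cong[where f=prob]) auto
      have "\<P>(\<omega> in M. Te k \<omega> \<bar> \<forall>l\<in>K. Or l \<omega> = o' l) = h k"
        using locality[of k o', OF that] pos eq1 by simp
      then show ?thesis unfolding cond_prob_def eq1 eq2 using pos by (simp add: field_simps)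
    qed
    have hco: "hc o'" using oO by (simp add: Os_def)
    show ?thesis
    proof (cases "o' k0")
      case False
      have "prob (E \<inter> A o') \<le> prob ({\<omega>\<in>space M. Te k0 \<omega>} \<inter> A o')"
        using TA_sets[OF \<open>k0 \<in> K\<close>] unfolding E_def Ep_def by (intro finite_measure_mono) auto
      also have "\<dots> = h k0 * prob (A o')" using loc[OF \<open>k0 \<in> K\<close> False] .
      also have "\<dots> \<le> B * prob (A o')" unfolding B_def
        by (intro mult_right_mono) auto
      finally show ?thesis .
    next
      case True
      then have "\<forall>i\<in>{1..j}. \<exists>k\<in>Ks i. \<not> o' k" using hco hc_def by auto
      then obtain f where f: "\<And>i. i \<in> {1..j} \<Longrightarrow> f i \<in> Ks i \<and> \<not> o' (f i)"
        by metis
      have fK: "f i \<in> K" if "i \<in> {1..j}" for i using f[OF that] Ks_sub[OF that] by auto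
      have "E \<inter> A o' \<subseteq> (\<Union>i\<in>{1..j}. {\<omega>\<in>space M. Te (f i) \<omega>} \<inter> A o')"
        unfolding E_def Ep_def using f by blast
      then have "prob (E \<inter> A o') \<le> prob (\<Union>i\<in>{1..j}. {\<omega>\<in>space M. Te (f i) \<omega>} \<inter> A o')"
        using TA_sets fK by (intro finite_measure_mono sets.finite_UN finite_atLeastAtMost) auto
      also have "\<dots> \<le> (\<Sum>i=1..j. prob ({\<omega>\<in>space M. Te (f i) \<omega>} \<inter> A o'))"
        using TA_sets fK by (intro finite_measure_subadditive_finite) auto
      also have "\<dots> = (\<Sum>i=1..j. h (f i) * prob (A o'))"
        using loc fK f by (intro sum.cong) auto
      also have "\<dots> = (\<Sum>i=1..j. h (f i)) * prob (A o')"
        by (simp add: sum_distrib_right)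
      also have "\<dots> \<le> (\<Sum>i=1..j. Max (h ` Ks i)) * prob (A o')"
        using pos f finKs by (intro mult_right_mono sum_mono Max_ge) auto
      also have "\<dots> \<le> B * prob (A o')" unfolding B_def
        using pos by (intro mult_right_mono) auto
      finally show ?thesis .
    qed
  qed
  have "prob {\<omega>\<in>space M. Ep \<omega> \<and> Hp \<omega>} = (\<Sum>o'\<in>Os. prob (E \<inter> A o'))"
    unfolding decEH using finOs E_sets A_sets disj
    by (intro finite_measure_finite_Union) (auto simp: disjoint_family_on_def)
  also have "\<dots> \<le> (\<Sum>o'\<in>Os. B * prob (A o'))" using atom by (intro sum_mono) auto
  also have "\<dots> = B * prob {\<omega>\<in>space M. Hp \<omega>}"
    unfolding decH sum_distrib_left[symmetric] using finOs A_sets disj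
    by (subst finite_measure_finite_Union) auto
  finally have key: "prob {\<omega>\<in>space M. Ep \<omega> \<and> Hp \<omega>} \<le> B * prob {\<omega>\<in>space M. Hp \<omega>}" .
  have Hpos: "prob {\<omega>\<in>space M. Hp \<omega>} > 0" using H0_pos by (simp add: Hp_def)
  show ?thesis
    unfolding cond_prob_def
    using key Hpos by (simp add: Ep_def Hp_def B_def pos_divide_le_eq)
qed

end
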